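(* Let $q$ be a prime power, $n=q^2-1$, let $0\le t\le n-1$ with $q$-adic expression $t=b_0+b_1q$ ($0\le b_0,b_1\le q-1$), let $\Delta=\{0,1,\ldots,t\}$ and let $E=D_\Delta\subseteq\mathbb{F}_{q^2}^{n}$ be the corresponding Reed–Solomon code. Then the EAQECC associated with $E$ (Hermitian construction) has parameters $$[[q^2-1,\,(q-b_1)^2-2b_0-2,\,t+2;\,b_1^2+1]]_q$$ when $b_0+b_1<q-1$, and parameters $$[[q^2-1,\,(q-b_1-1)^2,\,t+2;\,b_1^2+2(b_0+b_1-q)+4]]_q$$ otherwise (i.e. when $b_0+b_1\ge q-1$).
   Context: Let $P_1,\dots,P_n$ be the $n=q^2-1$ nonzero elements of $\mathbb{F}_{q^2}$ (the roots of $X^n-1$). For $\Delta\subseteq\{0,1,\ldots,n-1\}$, $D_\Delta$ is the $\mathbb{F}_{q^2}$-linear code spanned by the vectors $(P_1^i,\dots,P_n^i)$, $i\in\Delta$. The Hermitian inner product on $\mathbb{F}_{q^2}^n$ is $x\cdot y=\sum_{i=1}^n x_iy_i^q$. For a linear code $E\subseteq\mathbb{F}_{q^2}^n$ of dimension $k$ whose Hermitian dual $C$ has minimum distance $d$, the associated EAQECC is an entanglement-assisted quantum error-correcting code over $\mathbb{F}_q$ with parameters $[[n,\,n-2k+c,\,d;\,c]]_q$ (length, dimension, minimum distance, number of maximally entangled pairs), where $c=\dim E-\dim(E\cap C)$. *)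

theory Defs
  imports Main "HOL-Library.Function_Algebras" "HOL-Library.Cardinality" "HOL-Number_Theory.Number_Theory"
begin

text \<open>Vectors of length n over a field are functions nat => 'a, coordinates 0..<n,
  vanishing outside {0..<n}.\<close>

definition vsc :: "'a::field \<Rightarrow> (nat \<Rightarrow> 'a) \<Rightarrow> (nat \<Rightarrow> 'a)" where
  "vsc c v = (\<lambda>i. c * v i)"

definition ambient :: "nat \<Rightarrow> (nat \<Rightarrow> 'a::field) set" where
  "ambient n = {v. \<forall>i\<ge>n. v i = 0}"

definition D_code :: "nat \<Rightarrow> (nat \<Rightarrow> 'a::field) \<Rightarrow> nat set \<Rightarrow> (nat \<Rightarrow> 'a) set" where
  "D_code n P Delta = module.span vsc ((\<lambda>i. (\<lambda>j. if j < n then P j ^ i else 0)) ` Delta)"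

definition herm_ip :: "nat \<Rightarrow> nat \<Rightarrow> (nat \<Rightarrow> 'a::field) \<Rightarrow> (nat \<Rightarrow> 'a) \<Rightarrow> 'a" where
  "herm_ip q n x y = (\<Sum>i<n. x i * y i ^ q)"

definition herm_dual :: "nat \<Rightarrow> nat \<Rightarrow> (nat \<Rightarrow> 'a::field) set \<Rightarrow> (nat \<Rightarrow> 'a) set" where
  "herm_dual q n E = {y \<in> ambient n. \<forall>x\<in>E. herm_ip q n x y = 0}"

definition hweight :: "nat \<Rightarrow> (nat \<Rightarrow> 'a::field) \<Rightarrow> nat" where
  "hweight n v = card {i. i < n \<and> v i \<noteq> 0}"

text \<open>Minimum distance of a linear code; by the usual convention the zero code has
  minimum distance n+1.\<close>
definition min_dist :: "nat \<Rightarrow> (nat \<Rightarrow> 'a::field) set \<Rightarrow> nat" where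
  "min_dist n C = (if C \<subseteq> {(\<lambda>_. 0)} then n + 1
     else (LEAST d. \<exists>v\<in>C. v \<noteq> (\<lambda>_. 0) \<and> hweight n v = d))"

definition cdim :: "(nat \<Rightarrow> 'a::field) set \<Rightarrow> nat" where
  "cdim E = vector_space.dim vsc E"

end

theory Submission
  imports Defs "HOL-Computational_Algebra.Polynomial" "HOL-Computational_Algebra.Primes"
    "HOL-Number_Theory.Cong"
begin

lemma vs_vsc: "vector_space (vsc :: 'a::field \<Rightarrow> (nat \<Rightarrow> 'a) \<Rightarrow> _)"
  by unfold_locales (auto simp: vsc_def fun_eq_iff algebra_simps)

interpretation V: vector_space "vsc :: 'a::field \<Rightarrow> (nat \<Rightarrow> 'a) \<Rightarrow> _"
  by (rule vs_vsc)

lemma sum_fun_apply: "(sum f A) x = (\<Sum>a\<in>A. f a x)"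
  by (induction A rule: infinite_finite_induct) auto

lemma ff_pow_card_minus1:
  fixes x :: "'a::{field,finite}"
  assumes "x \<noteq> 0" shows "x ^ (CARD('a) - 1) = 1"
proof -
  have "x * (\<Prod>y\<in>UNIV-{0}. x * y) = x * x ^ (CARD('a) - 1) * \<Prod>(UNIV-{0})"
    by (simp add: prod.distrib mult_ac)
  also have "(\<Prod>y\<in>UNIV-{0}. x * y) = (\<Prod>y\<in>UNIV-{0}. y)"
    by (rule prod.reindex_bij_witness[of _ "\<lambda>y. y / x" "\<lambda>y. x * y"]) (use assms in auto)
  finally have "x * \<Prod>(UNIV-{0::'a}) = x * x ^ (CARD('a) - 1) * \<Prod>(UNIV-{0})" .
  moreover have "\<Prod>(UNIV-{0::'a}) \<noteq> 0" by simp
  ultimately show ?thesis using assms by simp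
qed

lemma ff_pow_card:
  fixes x :: "'a::{field,finite}"
  shows "x ^ CARD('a) = x"
proof (cases "x = 0")
  case True thus ?thesis using finite_UNIV_card_ge_0[where ?'a = 'a] by simp
next
  case False
  have "CARD('a) = Suc (CARD('a) - 1)" using finite_UNIV_card_ge_0[where ?'a = 'a] by simp
  hence "x ^ CARD('a) = x * x ^ (CARD('a) - 1)" by (metis power_Suc)
  thus ?thesis using ff_pow_card_minus1[OF False] by simp
qed

lemma ff_of_nat_card: "of_nat CARD('a::{field,finite}) = (0::'a)"
  using CHAR_dvd_CARD[where ?'a='a] of_nat_eq_0_iff_char_dvd by blast

lemma ff_char_prime: "prime CHAR('a::{field,finite})"
  using prime_CHAR_semidom[where ?'a='a] finite_imp_CHAR_pos[where ?'a='a] by auto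

locale herm =
  fixes q n :: nat and P :: "nat \<Rightarrow> 'a::{field,finite}"
  assumes pp: "primepow q" and cardA: "CARD('a) = q^2" and nd: "n = q^2 - 1"
    and bij: "bij_betw P {0..<n} (UNIV - {0})"
begin

lemma q_ge2: "q \<ge> 2"
  using primepow_gt_Suc_0[OF pp] by simp

lemma q2_ge: "q^2 \<ge> 4"
proof -
  have "2^2 \<le> q^2" using q_ge2 by (rule power_mono) simp
  thus ?thesis by simp
qed

lemma n_pos: "n > 0" using q2_ge nd by simp

lemma P_nz: "k < n \<Longrightarrow> P k \<noteq> 0"
  using bij by (auto simp: bij_betw_def)

lemma P_inj: "k < n \<Longrightarrow> l < n \<Longrightarrow> P k = P l \<Longrightarrow> k = l"
  using bij by (auto simp: bij_betw_def inj_on_def)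

lemma n_card: "n = CARD('a) - 1" using cardA nd by simp

lemma P_pow_n: "k < n \<Longrightarrow> P k ^ n = 1"
proof -
  assume "k < n"
  hence "P k \<noteq> 0" by (rule P_nz)
  thus ?thesis using ff_pow_card_minus1[of "P k"] n_card by simp
qed

lemma sum_P: "(\<Sum>k<n. f (P k)) = (\<Sum>y\<in>UNIV-{0}. f y)"
proof -
  have "(\<Sum>k\<in>{0..<n}. f (P k)) = (\<Sum>y\<in>UNIV-{0}. f y)"
    using sum.reindex_bij_betw[OF bij, of f] .
  thus ?thesis by (simp add: atLeast0LessThan)
qed

lemma of_nat_n: "(of_nat n :: 'a) = -1"
proof -
  have "CARD('a) = n + 1" using n_card finite_UNIV_card_ge_0[where ?'a='a] by simp
  hence "(of_nat n :: 'a) + 1 = 0" using ff_of_nat_card[where ?'a='a] by (simp add: add.commute)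
  thus ?thesis by (simp add: eq_neg_iff_add_eq_0 add.commute)
qed

lemma exists_nonroot:
  assumes "\<not> n dvd m"
  shows "\<exists>g::'a. g \<noteq> 0 \<and> g ^ m \<noteq> 1"
proof (rule ccontr)
  assume H: "\<not> ?thesis"
  define d where "d = m mod n"
  have d0: "d > 0" "d < n" using assms n_pos by (auto simp: d_def mod_greater_zero_iff_not_dvd)
  have r: "g ^ d = 1" if "g \<noteq> 0" for g :: 'a
  proof -
    have "g ^ n = 1" using ff_pow_card_minus1[OF that] n_card by simp
    have "g ^ m = g ^ (n * (m div n) + d)" by (simp add: d_def)
    also have "\<dots> = g ^ d" by (simp add: power_add power_mult \<open>g ^ n = 1\<close>)
    finally show ?thesis using H that by auto
  qed
  define p where "p = monom (1::'a) d + [:-1:]"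
  have dp: "degree p = d" using d0 unfolding p_def
    by (subst degree_add_eq_left) (auto simp: degree_monom_eq)
  hence pn: "p \<noteq> 0" using d0 by auto
  have "UNIV - {0} \<subseteq> {x. poly p x = 0}" using r by (auto simp: p_def poly_monom)
  hence "card (UNIV - {0::'a}) \<le> card {x. poly p x = 0}"
    by (intro card_mono poly_roots_finite pn)
  also have "\<dots> \<le> d" using card_poly_roots_bound[OF pn] dp by simp
  finally show False using d0 n_card by (simp add: card_Diff_subset)
qed

definition S :: "nat \<Rightarrow> 'a" where "S m = (\<Sum>k<n. P k ^ m)"

lemma S_eq: "S m = (if n dvd m then -1 else 0)"
proof (cases "n dvd m")
  case True
  then obtain r where m: "m = n * r" by auto
  have "S m = (\<Sum>k<n. 1)" unfolding S_def
    by (intro sum.cong refl) (simp add: m power_mult P_pow_n)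
  thus ?thesis using True of_nat_n by simp
next
  case False
  obtain g :: 'a where g: "g \<noteq> 0" "g ^ m \<noteq> 1" using exists_nonroot[OF False] by blast
  have e: "S m = (\<Sum>y\<in>UNIV-{0}. y ^ m)" unfolding S_def using sum_P[of "\<lambda>y. y ^ m"] .
  have "(\<Sum>y\<in>UNIV-{0::'a}. y ^ m) = (\<Sum>y\<in>UNIV-{0}. (g * y) ^ m)"
    by (rule sum.reindex_bij_witness[of _ "\<lambda>y. g * y" "\<lambda>y. y / g"]) (use g in auto)
  also have "\<dots> = g ^ m * (\<Sum>y\<in>UNIV-{0}. y ^ m)" by (simp add: power_mult_distrib sum_distrib_left)
  finally have "S m = g ^ m * S m" using e by simp
  hence "(1 - g ^ m) * S m = 0" by (simp add: algebra_simps)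
  thus ?thesis using False g by simp
qed


definition ev :: "nat \<Rightarrow> nat \<Rightarrow> 'a" where "ev i = (\<lambda>j. if j < n then P j ^ i else 0)"

lemma D_code_eq: "D_code n P D = V.span (ev ` D)"
  by (simp add: D_code_def ev_def)

definition vec :: "(nat \<Rightarrow> 'a) \<Rightarrow> nat set \<Rightarrow> nat \<Rightarrow> 'a" where
  "vec c I = (\<Sum>i\<in>I. vsc (c i) (ev i))"

lemma vec_apply: "vec c I k = (if k < n then (\<Sum>i\<in>I. c i * P k ^ i) else 0)"
  by (simp add: vec_def sum_fun_apply vsc_def ev_def)

definition L :: "nat \<Rightarrow> (nat \<Rightarrow> 'a) \<Rightarrow> 'a" where
  "L m x = - (\<Sum>k<n. x k * P k ^ (n - m))"

lemma dvd_range: "n dvd x \<Longrightarrow> 0 < x \<Longrightarrow> x < 2 * n \<Longrightarrow> x = n"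
proof -
  assume "n dvd x" "0 < x" "x < 2 * n"
  then obtain r where "x = n * r" by auto
  have "n * r < n * 2" using \<open>x < 2 * n\<close> \<open>x = n * r\<close> by (simp add: mult.commute)
  hence "r < 2" by simp
  moreover have "r \<noteq> 0" using \<open>0 < x\<close> \<open>x = n * r\<close> by auto
  ultimately have "r = 1" by arith
  thus ?thesis using \<open>x = n * r\<close> by simp
qed

lemma L_ev: "i < n \<Longrightarrow> m < n \<Longrightarrow> L m (ev i) = (if i = m then 1 else 0)"
proof -
  assume a: "i < n" "m < n"
  have "L m (ev i) = - S (i + (n - m))"
    unfolding L_def S_def ev_def by (simp add: power_add)
  moreover have "n dvd (i + (n - m)) \<longleftrightarrow> i = m"
  proof
    assume "n dvd (i + (n - m))"
    hence "i + (n - m) = n" using a by (intro dvd_range) auto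
    thus "i = m" using a by simp
  qed (use a in simp)
  ultimately show ?thesis by (simp add: S_eq)
qed

lemma L_sum: "finite A \<Longrightarrow> L m (\<Sum>v\<in>A. vsc (c v) v) = (\<Sum>v\<in>A. c v * L m v)"
proof -
  assume "finite A"
  have "L m (\<Sum>v\<in>A. vsc (c v) v) = - (\<Sum>k<n. \<Sum>v\<in>A. c v * v k * P k ^ (n - m))"
    unfolding L_def by (simp add: sum_fun_apply vsc_def sum_distrib_right)
  also have "\<dots> = - (\<Sum>v\<in>A. \<Sum>k<n. c v * v k * P k ^ (n - m))" by (simp add: sum.swap[of _ "{..<n}"])
  also have "\<dots> = (\<Sum>v\<in>A. c v * L m v)"
    by (simp add: L_def sum_distrib_left mult.assoc sum_negf)
  finally show ?thesis .
qed

lemma ev_inj: assumes "i < n" "j < n" "ev i = ev j" shows "i = j"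
proof (rule ccontr)
  assume "i \<noteq> j"
  have "L i (ev i) = 1" using L_ev[of i i] assms by simp
  moreover have "L i (ev j) = 0" using L_ev[of j i] assms \<open>i \<noteq> j\<close> by simp
  ultimately show False using assms(3) by simp
qed

lemma inj_ev: "I \<subseteq> {0..<n} \<Longrightarrow> inj_on ev I"
  by (auto intro!: inj_onI ev_inj)

lemma indep_ev: "I \<subseteq> {0..<n} \<Longrightarrow> V.independent (ev ` I)"
proof -
  assume I: "I \<subseteq> {0..<n}"
  have fI: "finite I" using I finite_subset by blast
  show ?thesis
  proof (rule V.independent_if_scalars_zero)
    show "finite (ev ` I)" using fI by simp
  next
    fix f x assume s: "(\<Sum>x\<in>ev ` I. vsc (f x) x) = 0" and x: "x \<in> ev ` I"
    then obtain m where m: "m \<in> I" "x = ev m" by auto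
    have "0 = L m (\<Sum>x\<in>ev ` I. vsc (f x) x)" using s by (simp add: L_def)
    also have "\<dots> = (\<Sum>v\<in>ev ` I. f v * L m v)" using fI by (simp add: L_sum)
    also have "\<dots> = (\<Sum>v\<in>ev ` I. if v = ev m then f v else 0)"
    proof (intro sum.cong refl)
      fix v assume "v \<in> ev ` I"
      then obtain i where i: "i \<in> I" "v = ev i" by auto
      have "i < n" "m < n" using i m I by auto
      thus "f v * L m v = (if v = ev m then f v else 0)"
        using L_ev[of i m] i ev_inj[of i m] by auto
    qed
    also have "\<dots> = f (ev m)" by (subst sum.delta) (use fI m in auto)
    finally show "f x = 0" using m(2) by simp
  qed
qed

lemma dim_ev: assumes "I \<subseteq> {0..<n}" shows "V.dim (V.span (ev ` I)) = card I"
proof -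
  have "V.dim (V.span (ev ` I)) = card (ev ` I)"
    by (rule V.dim_span_eq_card_independent[OF indep_ev[OF assms]])
  also have "\<dots> = card I" by (rule card_image[OF inj_ev[OF assms]])
  finally show ?thesis .
qed

lemma span_ev_repr:
  assumes "I \<subseteq> {0..<n}" "x \<in> V.span (ev ` I)" shows "\<exists>c. x = vec c I"
proof -
  have fI: "finite I" using assms finite_subset by blast
  obtain u where "x = (\<Sum>v\<in>ev ` I. vsc (u v) v)"
    using assms(2) V.span_finite[of "ev ` I"] fI by auto
  also have "\<dots> = vec (u \<circ> ev) I" unfolding vec_def
    by (subst sum.reindex[OF inj_ev[OF assms(1)]]) simp
  finally have "x = vec (u \<circ> ev) I" .
  thus ?thesis by blast
qed

lemma vec_in_span: "vec c I \<in> V.span (ev ` I)"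
  unfolding vec_def
proof (rule V.span_sum)
  fix i assume "i \<in> I"
  hence "ev i \<in> V.span (ev ` I)" by (intro V.span_base) simp
  thus "vsc (c i) (ev i) \<in> V.span (ev ` I)" by (rule V.span_scale)
qed

lemma vec_ambient: "vec c I \<in> ambient n"
  unfolding ambient_def using vec_apply[of c I] by auto

end


context herm begin

lemma q_char_pow: "\<exists>e. q = CHAR('a) ^ e"
proof -
  obtain p e where pe: "prime p" "e > 0" "q = p ^ e" using pp by (auto simp: primepow_def)
  have "CHAR('a) dvd p ^ (2 * e)" using CHAR_dvd_CARD[where ?'a='a] cardA pe(3)
    by (simp add: power_mult mult.commute)
  hence "CHAR('a) dvd p" using ff_char_prime[where ?'a='a] prime_dvd_power by blast
  hence "CHAR('a) = p" using ff_char_prime[where ?'a='a] pe(1) primes_dvd_imp_eq by blast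
  thus ?thesis using pe by blast
qed

lemma frob_sum: "(\<Sum>i\<in>I. f i) ^ q = (\<Sum>i\<in>I. (f i :: 'a) ^ q)"
proof -
  obtain e where "q = CHAR('a) ^ e" using q_char_pow by blast
  thus ?thesis using freshmans_dream_sum'[OF ff_char_prime] by blast
qed

lemma q_pos: "q > 0" using q_ge2 by simp

lemma herm_ev_vec: "herm_ip q n (ev j) (vec c I) = (\<Sum>i\<in>I. c i ^ q * S (j + q * i))"
proof -
  have "herm_ip q n (ev j) (vec c I) = (\<Sum>k<n. P k ^ j * (\<Sum>i\<in>I. c i * P k ^ i) ^ q)"
    unfolding herm_ip_def by (intro sum.cong refl) (simp add: ev_def vec_apply)
  also have "\<dots> = (\<Sum>k<n. \<Sum>i\<in>I. c i ^ q * P k ^ (j + q * i))"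
    by (intro sum.cong refl)
       (simp add: frob_sum sum_distrib_left power_mult_distrib power_add power_mult mult.commute
          mult.left_commute)
  also have "\<dots> = (\<Sum>i\<in>I. \<Sum>k<n. c i ^ q * P k ^ (j + q * i))" by (rule sum.swap)
  also have "\<dots> = (\<Sum>i\<in>I. c i ^ q * S (j + q * i))"
    by (simp add: S_def sum_distrib_left)
  finally show ?thesis .
qed

lemma herm_vec_left: "finite J \<Longrightarrow> herm_ip q n (vec d J) y = (\<Sum>j\<in>J. d j * herm_ip q n (ev j) y)"
proof -
  assume "finite J"
  have "herm_ip q n (vec d J) y = (\<Sum>k<n. \<Sum>j\<in>J. d j * (ev j k * y k ^ q))"
    unfolding herm_ip_def
    by (intro sum.cong refl) (simp add: ev_def vec_apply sum_distrib_right mult.assoc)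
  also have "\<dots> = (\<Sum>j\<in>J. \<Sum>k<n. d j * (ev j k * y k ^ q))" by (rule sum.swap)
  also have "\<dots> = (\<Sum>j\<in>J. d j * herm_ip q n (ev j) y)"
    by (simp add: herm_ip_def sum_distrib_left)
  finally show ?thesis .
qed

lemma qq: "q * q = n + 1" using nd q2_ge by (simp add: power2_eq_square)

lemma partner_sym: "n dvd (j + q * i) \<Longrightarrow> n dvd (i + q * j)"
proof -
  assume a: "n dvd (j + q * i)"
  have "q * (j + q * i) = (i + q * j) + n * i"
    by (simp add: algebra_simps qq flip: mult.assoc)
  moreover have "n dvd q * (j + q * i)" using a by simp
  ultimately have "n dvd (i + q * j) + n * i" by simp
  thus ?thesis by (simp add: dvd_add_left_iff)
qed

lemma partner_uniq:
  assumes "i1 < n" "i2 < n" "n dvd (j + q * i1)" "n dvd (j + q * i2)" shows "i1 = i2"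
proof -
  have "[j + q * i1 = j + q * i2] (mod n)" using assms(3,4)
    by (simp add: cong_def dvd_eq_mod_eq_0)
  hence "[q * i1 = q * i2] (mod n)" by (simp add: cong_add_lcancel_nat)
  hence "[q * (q * i1) = q * (q * i2)] (mod n)" by (rule cong_scalar_left)
  moreover have "q * (q * i) = i + n * i" for i by (simp add: qq flip: mult.assoc)
  ultimately have "[i1 + n * i1 = i2 + n * i2] (mod n)" by simp
  hence "i1 mod n = i2 mod n" by (simp add: cong_def)
  thus ?thesis using assms(1,2) by simp
qed

end


locale hermt = herm q n P for q n and P :: "nat \<Rightarrow> 'a::{field,finite}" +
  fixes t :: nat
  assumes tn: "t < n"
begin

definition E :: "(nat \<Rightarrow> 'a) set" where "E = V.span (ev ` {0..t})"
definition C :: "(nat \<Rightarrow> 'a) set" where "C = herm_dual q n E"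
definition T :: "nat set" where "T = {i \<in> {0..t}. \<exists>j\<in>{0..t}. n dvd (j + q * i)}"
definition J :: "nat set" where "J = {0..t} - T"

lemma sub_n: "{0..t} \<subseteq> {0..<n}" using tn by auto

lemma mem_E: "x \<in> E \<longleftrightarrow> (\<exists>c. x = vec c {0..t})"
  unfolding E_def using span_ev_repr[OF sub_n] vec_in_span by blast

lemma mem_C: "y \<in> C \<longleftrightarrow> y \<in> ambient n \<and> (\<forall>j\<in>{0..t}. herm_ip q n (ev j) y = 0)"
proof
  assume "y \<in> C"
  moreover have "ev j \<in> E" if "j \<in> {0..t}" for j
    unfolding E_def using that by (intro V.span_base) simp
  ultimately show "y \<in> ambient n \<and> (\<forall>j\<in>{0..t}. herm_ip q n (ev j) y = 0)"
    by (auto simp: C_def herm_dual_def)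
next
  assume a: "y \<in> ambient n \<and> (\<forall>j\<in>{0..t}. herm_ip q n (ev j) y = 0)"
  have "herm_ip q n x y = 0" if "x \<in> E" for x
  proof -
    obtain d where "x = vec d {0..t}" using \<open>x \<in> E\<close> mem_E by blast
    thus ?thesis using a by (simp add: herm_vec_left)
  qed
  thus "y \<in> C" using a by (auto simp: C_def herm_dual_def)
qed

lemma sum_partner1:
  assumes "i0 \<le> t" "n dvd (j + q * i0)"
  shows "(\<Sum>i\<in>{0..t}. c i ^ q * S (j + q * i)) = - (c i0 ^ q)"
proof -
  have "(\<Sum>i\<in>{0..t}. c i ^ q * S (j + q * i)) = (\<Sum>i\<in>{0..t}. if i = i0 then - (c i0 ^ q) else 0)"
  proof (intro sum.cong refl)
    fix i assume i: "i \<in> {0..t}"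
    show "c i ^ q * S (j + q * i) = (if i = i0 then - (c i0 ^ q) else 0)"
    proof (cases "i = i0")
      case True thus ?thesis using assms by (simp add: S_eq)
    next
      case False
      have "\<not> n dvd (j + q * i)"
        using partner_uniq[of i i0 j] False assms i tn by auto
      thus ?thesis using False by (simp add: S_eq)
    qed
  qed
  also have "\<dots> = - (c i0 ^ q)" using assms by (subst sum.delta) auto
  finally show ?thesis .
qed

lemma sum_partner0:
  assumes "\<forall>i\<in>{0..t}. \<not> n dvd (j + q * i)"
  shows "(\<Sum>i\<in>{0..t}. c i ^ q * S (j + q * i)) = 0"
  using assms by (intro sum.neutral) (simp add: S_eq)

lemma crit: "vec c {0..t} \<in> C \<longleftrightarrow> (\<forall>i\<in>T. c i = 0)"
proof
  assume a: "vec c {0..t} \<in> C"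
  show "\<forall>i\<in>T. c i = 0"
  proof
    fix i assume "i \<in> T"
    then obtain j where j: "j \<in> {0..t}" "i \<le> t" "n dvd (j + q * i)" by (auto simp: T_def)
    have "0 = herm_ip q n (ev j) (vec c {0..t})" using a j mem_C by auto
    also have "\<dots> = - (c i ^ q)" by (simp add: herm_ev_vec sum_partner1[OF j(2,3)])
    finally show "c i = 0" using q_pos by simp
  qed
next
  assume a: "\<forall>i\<in>T. c i = 0"
  have "herm_ip q n (ev j) (vec c {0..t}) = 0" if j: "j \<in> {0..t}" for j
  proof (cases "\<exists>i\<in>{0..t}. n dvd (j + q * i)")
    case True
    then obtain i where i: "i \<in> {0..t}" "n dvd (j + q * i)" by blast
    hence "i \<in> T" using j by (auto simp: T_def)
    hence "c i = 0" using a by blast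
    thus ?thesis using i q_pos by (simp add: herm_ev_vec sum_partner1)
  next
    case False thus ?thesis by (simp add: herm_ev_vec sum_partner0)
  qed
  thus "vec c {0..t} \<in> C" using vec_ambient mem_C by blast
qed

lemma J_sub: "J \<subseteq> {0..<n}" using sub_n by (auto simp: J_def)

lemma EC: "E \<inter> C = V.span (ev ` J)"
proof
  show "E \<inter> C \<subseteq> V.span (ev ` J)"
  proof
    fix x assume x: "x \<in> E \<inter> C"
    then obtain c where c: "x = vec c {0..t}" using mem_E by blast
    hence z: "\<forall>i\<in>T. c i = 0" using x crit by blast
    have "vec c {0..t} = vec c J" unfolding vec_def
    proof (rule sum.mono_neutral_right)
      show "\<forall>i\<in>{0..t} - J. vsc (c i) (ev i) = 0"
      proof
        fix i assume "i \<in> {0..t} - J"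
        hence "i \<in> T" by (auto simp: J_def)
        hence "c i = 0" using z by blast
        thus "vsc (c i) (ev i) = 0" by (simp add: vsc_def fun_eq_iff)
      qed
    qed (auto simp: J_def)
    thus "x \<in> V.span (ev ` J)" using c vec_in_span by simp
  qed
next
  show "V.span (ev ` J) \<subseteq> E \<inter> C"
  proof
    fix x assume "x \<in> V.span (ev ` J)"
    then obtain c where c: "x = vec c J" using span_ev_repr[OF J_sub] by blast
    define c' where "c' = (\<lambda>i. if i \<in> J then c i else 0)"
    have "vec c' {0..t} = vec c J" unfolding vec_def
      by (rule sum.mono_neutral_cong_right) (auto simp: J_def c'_def vsc_def fun_eq_iff)
    moreover have "\<forall>i\<in>T. c' i = 0" by (auto simp: c'_def J_def)
    ultimately have "x = vec c' {0..t}" "vec c' {0..t} \<in> C" using c crit[of c'] by auto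
    thus "x \<in> E \<inter> C" using mem_E by blast
  qed
qed

lemma dim_E: "cdim E = t + 1"
  unfolding cdim_def E_def using dim_ev[OF sub_n] by simp

lemma dim_EC: "cdim (E \<inter> C) = t + 1 - card T"
proof -
  have "cdim (E \<inter> C) = card J" unfolding cdim_def EC using dim_ev[OF J_sub] .
  also have "\<dots> = t + 1 - card T" unfolding J_def
    by (subst card_Diff_subset) (auto simp: T_def)
  finally show ?thesis .
qed

lemma c_eq: "cdim E - cdim (E \<inter> C) = card T"
proof -
  have "T \<subseteq> {0..t}" by (auto simp: T_def)
  hence "card T \<le> card {0..t}" by (intro card_mono) auto
  hence "card T \<le> t + 1" by simp
  thus ?thesis using dim_E dim_EC by simp
qed

end


context herm begin

lemma poly_sum_swap:
  "(\<Sum>k<n. poly f (P k) * w k) = (\<Sum>i\<le>degree f. coeff f i * (\<Sum>k<n. P k ^ i * w k))"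
proof -
  have "(\<Sum>k<n. poly f (P k) * w k) = (\<Sum>k<n. \<Sum>i\<le>degree f. coeff f i * (P k ^ i * w k))"
    by (simp add: poly_altdef sum_distrib_right mult.assoc)
  also have "\<dots> = (\<Sum>i\<le>degree f. \<Sum>k<n. coeff f i * (P k ^ i * w k))" by (rule sum.swap)
  also have "\<dots> = (\<Sum>i\<le>degree f. coeff f i * (\<Sum>k<n. P k ^ i * w k))"
    by (simp add: sum_distrib_left)
  finally show ?thesis .
qed

lemma degree_lin_prod: "finite A \<Longrightarrow> degree (\<Prod>l\<in>A. [:- P l, 1:]) \<le> card A"
proof -
  assume "finite A"
  hence "degree (\<Prod>l\<in>A. [:- P l, 1:]) \<le> sum (degree \<circ> (\<lambda>l. [:- P l, 1:])) A"
    by (rule degree_prod_sum_le)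
  also have "\<dots> = card A" by simp
  finally show ?thesis .
qed

lemma poly_lin_prod: "poly (\<Prod>l\<in>A. [:- P l, 1:]) x = (\<Prod>l\<in>A. x - P l)"
  by (simp add: poly_prod)

lemma hweight_le: "hweight n y \<le> n"
proof -
  have "{i. i < n \<and> y i \<noteq> 0} \<subseteq> {..<n}" by auto
  hence "card {i. i < n \<and> y i \<noteq> 0} \<le> card {..<n}" by (intro card_mono) auto
  thus ?thesis by (simp add: hweight_def)
qed

end

context hermt begin

lemma herm_ev_apply: "herm_ip q n (ev j) y = (\<Sum>k<n. P k ^ j * y k ^ q)"
  unfolding herm_ip_def by (intro sum.cong refl) (simp add: ev_def)

lemma lower:
  assumes y: "y \<in> C" "y \<noteq> (\<lambda>_. 0)"
  shows "hweight n y \<ge> t + 2"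
proof (rule ccontr)
  assume nt: "\<not> hweight n y \<ge> t + 2"
  define Sp where "Sp = {k. k < n \<and> y k \<noteq> 0}"
  have amb: "y \<in> ambient n" and orth: "\<forall>j\<in>{0..t}. herm_ip q n (ev j) y = 0"
    using y mem_C by auto
  have fS: "finite Sp" by (simp add: Sp_def)
  have cS: "card Sp \<le> t + 1" using nt by (simp add: hweight_def Sp_def)
  obtain k0 where k0: "y k0 \<noteq> 0" using y(2) by auto
  hence k0n: "k0 < n" using amb by (auto simp: ambient_def not_le[symmetric])
  hence k0S: "k0 \<in> Sp" using k0 by (simp add: Sp_def)
  define f where "f = (\<Prod>l\<in>Sp - {k0}. [:- P l, 1:])"
  have "degree f \<le> card (Sp - {k0})" unfolding f_def using fS by (intro degree_lin_prod) auto
  also have "\<dots> = card Sp - 1" using k0S fS by simp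
  finally have df: "degree f \<le> t" using cS by simp
  have "(\<Sum>k<n. poly f (P k) * y k ^ q) = (\<Sum>i\<le>degree f. coeff f i * (\<Sum>k<n. P k ^ i * y k ^ q))"
    by (rule poly_sum_swap)
  also have "\<dots> = 0"
  proof (intro sum.neutral ballI)
    fix i assume "i \<in> {..degree f}"
    hence "i \<in> {0..t}" using df by auto
    thus "coeff f i * (\<Sum>k<n. P k ^ i * y k ^ q) = 0" using orth herm_ev_apply by simp
  qed
  finally have s0: "(\<Sum>k<n. poly f (P k) * y k ^ q) = 0" .
  have "(\<Sum>k<n. poly f (P k) * y k ^ q) = poly f (P k0) * y k0 ^ q + (\<Sum>k\<in>{..<n} - {k0}. poly f (P k) * y k ^ q)"
    using k0n by (subst sum.remove[of _ k0]) auto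
  also have "(\<Sum>k\<in>{..<n} - {k0}. poly f (P k) * y k ^ q) = 0"
  proof (intro sum.neutral ballI)
    fix k assume k: "k \<in> {..<n} - {k0}"
    show "poly f (P k) * y k ^ q = 0"
    proof (cases "y k = 0")
      case True thus ?thesis using q_pos by simp
    next
      case False
      hence "k \<in> Sp - {k0}" using k by (auto simp: Sp_def)
      hence "poly f (P k) = 0" unfolding f_def poly_lin_prod using fS
        by (subst prod_zero_iff) auto
      thus ?thesis by simp
    qed
  qed
  finally have "poly f (P k0) * y k0 ^ q = 0" using s0 by simp
  moreover have "poly f (P k0) \<noteq> 0" unfolding f_def poly_lin_prod using fS k0n
    by (subst prod_zero_iff) (auto simp: Sp_def dest: P_inj)
  ultimately show False using k0 by simp
qed

lemma upper:
  assumes "t + 2 \<le> n"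
  shows "\<exists>y\<in>C. y \<noteq> (\<lambda>_. 0) \<and> hweight n y = t + 2"
proof -
  define m where "m = n - (t + 2)"
  define g where "g = (\<Prod>l\<in>{..<m}. [:- P l, 1:])"
  define z where "z = (\<lambda>k. P k * poly g (P k))"
  define y where "y = (\<lambda>k. if k < n then z k ^ q else 0)"
  have dg: "degree g \<le> m" unfolding g_def using degree_lin_prod[of "{..<m}"] by simp
  have zq: "(z k ^ q) ^ q = z k" for k
    using ff_pow_card[of "z k"] cardA by (simp add: power2_eq_square power_mult)
  have znz: "z k \<noteq> 0 \<longleftrightarrow> m \<le> k" if "k < n" for k
  proof -
    have "z k \<noteq> 0 \<longleftrightarrow> (\<forall>l<m. P k \<noteq> P l)"
      unfolding z_def g_def poly_lin_prod using P_nz[OF that] by (auto simp: prod_zero_iff)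
    also have "\<dots> \<longleftrightarrow> m \<le> k" using that m_def P_inj
      by (metis diff_le_self le_trans less_imp_le_nat not_le)
    finally show ?thesis .
  qed
  have "y \<in> C" unfolding mem_C
  proof
    show "y \<in> ambient n" by (simp add: ambient_def y_def)
    show "\<forall>j\<in>{0..t}. herm_ip q n (ev j) y = 0"
    proof
      fix j assume j: "j \<in> {0..t}"
      have "herm_ip q n (ev j) y = (\<Sum>k<n. P k ^ j * z k)"
        unfolding herm_ev_apply by (intro sum.cong refl) (simp add: y_def zq)
      also have "\<dots> = (\<Sum>k<n. poly g (P k) * P k ^ (j + 1))"
        by (intro sum.cong refl) (simp add: z_def power_add mult_ac)
      also have "\<dots> = (\<Sum>i\<le>degree g. coeff g i * (\<Sum>k<n. P k ^ i * P k ^ (j + 1)))"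
        by (rule poly_sum_swap)
      also have "\<dots> = 0"
      proof (intro sum.neutral ballI)
        fix i assume "i \<in> {..degree g}"
        hence i: "i \<le> m" using dg by auto
        have "(\<Sum>k<n. P k ^ i * P k ^ (j + 1)) = S (i + j + 1)"
          by (simp add: S_def power_add mult_ac)
        also have "\<dots> = 0"
        proof -
          have jt: "j \<le> t" using j by simp
          have "0 < i + j + 1" by simp
          moreover have "i + j + 1 < n" using i jt assms unfolding m_def by linarith
          ultimately have "\<not> n dvd (i + j + 1)" by (rule nat_dvd_not_less)
          thus ?thesis by (simp add: S_eq)
        qed
        finally show "coeff g i * (\<Sum>k<n. P k ^ i * P k ^ (j + 1)) = 0" by simp
      qed
      finally show "herm_ip q n (ev j) y = 0" .
    qed
  qed
  moreover have sup: "{k. k < n \<and> y k \<noteq> 0} = {m..<n}"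
    using znz q_pos by (auto simp: y_def)
  hence "hweight n y = t + 2" using assms by (simp add: hweight_def m_def)
  moreover have "y \<noteq> (\<lambda>_. 0)"
  proof
    assume "y = (\<lambda>_. 0)"
    hence "{k. k < n \<and> y k \<noteq> 0} = {}" by simp
    thus False using sup assms m_def by auto
  qed
  ultimately show ?thesis by blast
qed

lemma min_dist_C: "min_dist n C = t + 2"
proof (cases "t + 2 \<le> n")
  case True
  obtain y where y: "y \<in> C" "y \<noteq> (\<lambda>_. 0)" "hweight n y = t + 2" using upper[OF True] by blast
  hence "\<not> C \<subseteq> {(\<lambda>_. 0)}" by auto
  moreover have "(LEAST d. \<exists>v\<in>C. v \<noteq> (\<lambda>_. 0) \<and> hweight n v = d) = t + 2"
    by (rule Least_equality) (use y lower in auto)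
  ultimately show ?thesis by (simp add: min_dist_def)
next
  case False
  hence tn1: "t + 1 = n" using tn by simp
  have "C \<subseteq> {(\<lambda>_. 0)}"
  proof
    fix y assume "y \<in> C"
    show "y \<in> {(\<lambda>_. 0)}"
    proof (rule ccontr)
      assume "y \<notin> {(\<lambda>_. 0)}"
      hence "hweight n y \<ge> t + 2" using lower \<open>y \<in> C\<close> by auto
      thus False using hweight_le[of y] tn1 by simp
    qed
  qed
  thus ?thesis using tn1 by (simp add: min_dist_def)
qed

end


lemma digit_cmp:
  fixes q x0 x1 y0 y1 :: nat
  assumes "x0 < q" "y0 < q"
  shows "x0 + x1 * q \<le> y0 + y1 * q \<longleftrightarrow> x1 < y1 \<or> (x1 = y1 \<and> x0 \<le> y0)"
proof (cases "x1 < y1")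
  case True
  hence "Suc x1 * q \<le> y1 * q" by (intro mult_le_mono1) simp
  hence "x0 + x1 * q \<le> y0 + y1 * q" using assms by simp
  thus ?thesis using True by simp
next
  case False
  show ?thesis
  proof (cases "x1 = y1")
    case True thus ?thesis by simp
  next
    case False2: False
    hence "y1 < x1" using False by simp
    hence "Suc y1 * q \<le> x1 * q" by (intro mult_le_mono1) simp
    hence "\<not> x0 + x1 * q \<le> y0 + y1 * q" using assms by simp
    thus ?thesis using False False2 by simp
  qed
qed

lemma digit_inj:
  fixes q a0 a1 c0 c1 :: nat
  assumes "a0 < q" "c0 < q" "a0 + a1 * q = c0 + c1 * q"
  shows "a0 = c0 \<and> a1 = c1"
proof -
  have "(a0 + a1 * q) mod q = a0" "(a0 + a1 * q) div q = a1" using assms(1) by auto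
  moreover have "(c0 + c1 * q) mod q = c0" "(c0 + c1 * q) div q = c1" using assms(2) by auto
  ultimately show ?thesis using assms(3) by metis
qed

locale comb =
  fixes q n b0 b1 t :: nat
  assumes q2: "q \<ge> 2" and nd: "n = q^2 - 1" and b0: "b0 \<le> q - 1" and b1: "b1 \<le> q - 1"
    and tdef: "t = b0 + b1 * q" and tn: "t \<le> n - 1"
begin

lemma qsq: "q^2 = q * q" by (simp add: power2_eq_square)

lemma qq4: "q * q \<ge> 4"
proof -
  have "2 * 2 \<le> q * q" using q2 by (intro mult_le_mono) auto
  thus ?thesis by simp
qed

lemma n_eq: "n + 1 = q * q" using qq4 nd qsq by simp

lemma n_digits: "n = (q - 1) + (q - 1) * q"
proof -
  have "(q - 1) + (q - 1) * q + 1 = q * q" using q2 by (simp add: algebra_simps)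
  thus ?thesis using n_eq by simp
qed

definition sig :: "nat \<Rightarrow> nat" where
  "sig i = (if i = 0 then 0 else (q - 1 - i div q) + (q - 1 - i mod q) * q)"

lemma i_digits: "i < n \<Longrightarrow> i div q \<le> q - 1 \<and> i mod q \<le> q - 1"
proof -
  assume "i < n"
  hence "i < q * q" using n_eq by simp
  hence "i div q < q" by (intro less_mult_imp_div_less)
  moreover have "i mod q < q" using q2 by simp
  ultimately show ?thesis by linarith
qed

lemma sig_dvd: "i < n \<Longrightarrow> n dvd (sig i + q * i)"
proof (cases "i = 0")
  case True thus ?thesis by (simp add: sig_def)
next
  case False
  assume i: "i < n"
  define a0 where "a0 = i mod q"
  define a1 where "a1 = i div q"
  have d: "a1 \<le> q - 1" "a0 \<le> q - 1" using i_digits[OF i] by (auto simp: a0_def a1_def)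
  have ii: "i = a0 + a1 * q" by (simp add: a0_def a1_def)
  have si: "sig i = (q - 1 - a1) + (q - 1 - a0) * q" using False by (simp add: sig_def a0_def a1_def)
  have "int (sig i + q * i) = (int q - 1 - int a1) + (int q - 1 - int a0) * int q + int q * (int a0 + int a1 * int q)"
    using d q2 unfolding si by (subst ii) (simp add: of_nat_diff)
  also have "\<dots> = (int q * int q - 1) * (1 + int a1)" by (simp add: algebra_simps)
  also have "\<dots> = int n * (1 + int a1)"
  proof -
    have "int (n + 1) = int (q * q)" using n_eq by simp
    hence "int n = int q * int q - 1" by simp
    thus ?thesis by simp
  qed
  also have "\<dots> = int (n * (1 + a1))" by (simp add: algebra_simps)
  finally have "sig i + q * i = n * (1 + a1)" by (simp only: of_nat_eq_iff)
  thus ?thesis by simp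
qed

lemma sig_lt: "i < n \<Longrightarrow> sig i < n"
proof (cases "i = 0")
  case True thus ?thesis using qq4 n_eq by (simp add: sig_def)
next
  case False
  assume i: "i < n"
  have d: "i div q \<le> q - 1" "i mod q \<le> q - 1" using i_digits[OF i] by auto
  have "i div q > 0 \<or> i mod q > 0"
    using False by (metis add_cancel_left_left div_mult_mod_eq gr0I mult_0)
  define x where "x = q - 1 - i div q"
  define y where "y = q - 1 - i mod q"
  have xy: "x < q - 1 \<or> y < q - 1" "x \<le> q - 1" "y \<le> q - 1"
    using \<open>i div q > 0 \<or> i mod q > 0\<close> d q2 by (auto simp: x_def y_def)
  have "x + y * q < (q - 1) + (q - 1) * q"
  proof (cases "x < q - 1")
    case True
    have "y * q \<le> (q - 1) * q" using xy by (intro mult_le_mono1)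
    thus ?thesis using True by linarith
  next
    case False
    hence "y < q - 1" using xy by simp
    hence "y * q < (q - 1) * q" using q2 by (intro mult_less_mono1) auto
    thus ?thesis using xy by linarith
  qed
  hence "sig i < (q - 1) + (q - 1) * q" using False by (simp add: sig_def x_def y_def)
  thus ?thesis using n_digits by simp
qed

lemma partner_eq: "i < n \<Longrightarrow> j < n \<Longrightarrow> n dvd (j + q * i) \<longleftrightarrow> j = sig i"
proof
  assume i: "i < n" and j: "j < n" and dj: "n dvd (j + q * i)"
  have ds: "n dvd (sig i + q * i)" by (rule sig_dvd[OF i])
  have "[j + q * i = sig i + q * i] (mod n)" using dj ds by (simp add: cong_def dvd_eq_mod_eq_0)
  hence "[j = sig i] (mod n)" by (simp add: cong_add_rcancel_nat)
  hence "j mod n = sig i mod n" by (simp add: cong_def)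
  thus "j = sig i" using j sig_lt[OF i] by simp
next
  assume "i < n" "j < n" "j = sig i"
  thus "n dvd (j + q * i)" using sig_dvd by simp
qed


lemma n_pos: "n > 0" using n_eq qq4 by simp
lemma t_lt: "t < n" using tn n_pos by simp

definition Tset :: "nat set" where "Tset = {i \<in> {0..t}. \<exists>j\<in>{0..t}. n dvd (j + q * i)}"

lemma T_alt: "Tset = {i. i \<le> t \<and> sig i \<le> t}"
proof (intro Set.set_eqI iffI)
  fix i assume "i \<in> Tset"
  then obtain j where j: "i \<le> t" "j \<le> t" "n dvd (j + q * i)" by (auto simp: Tset_def)
  hence "j = sig i" using partner_eq[of i j] t_lt by simp
  thus "i \<in> {i. i \<le> t \<and> sig i \<le> t}" using j by simp
next
  fix i assume i: "i \<in> {i. i \<le> t \<and> sig i \<le> t}"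
  hence "n dvd (sig i + q * i)" using sig_dvd t_lt by simp
  thus "i \<in> Tset" using i by (auto simp: Tset_def)
qed

definition lex :: "nat \<Rightarrow> nat \<Rightarrow> bool" where "lex x0 x1 \<longleftrightarrow> x1 < b1 \<or> (x1 = b1 \<and> x0 \<le> b0)"

definition Q :: "(nat \<times> nat) set" where
  "Q = {(a0, a1). a0 < q \<and> a1 < q \<and> (a0 \<noteq> 0 \<or> a1 \<noteq> 0) \<and> lex a0 a1 \<and> lex (q - 1 - a1) (q - 1 - a0)}"

definition h :: "nat \<times> nat \<Rightarrow> nat" where "h p = fst p + snd p * q"

lemma sig_nz: "x \<noteq> 0 \<Longrightarrow> sig x = (q - 1 - x div q) + (q - 1 - x mod q) * q"
  by (simp add: sig_def)

lemma b0q: "b0 < q" using b0 q2 by simp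

lemma dig_facts:
  assumes "a0 < q" "a1 < q"
  shows "(a0 + a1 * q) mod q = a0" "(a0 + a1 * q) div q = a1"
    "a0 + a1 * q = 0 \<longleftrightarrow> a0 = 0 \<and> a1 = 0"
    "a0 + a1 * q \<le> t \<longleftrightarrow> lex a0 a1"
    "a0 + a1 * q \<noteq> 0 \<Longrightarrow> sig (a0 + a1 * q) \<le> t \<longleftrightarrow> lex (q - 1 - a1) (q - 1 - a0)"
proof -
  show m: "(a0 + a1 * q) mod q = a0" and d: "(a0 + a1 * q) div q = a1" using assms by auto
  show "a0 + a1 * q = 0 \<longleftrightarrow> a0 = 0 \<and> a1 = 0" using q2 by auto
  show "a0 + a1 * q \<le> t \<longleftrightarrow> lex a0 a1" unfolding tdef lex_def
    by (rule digit_cmp[OF assms(1) b0q])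
  assume nz: "a0 + a1 * q \<noteq> 0"
  have "sig (a0 + a1 * q) = (q - 1 - (a0 + a1 * q) div q) + (q - 1 - (a0 + a1 * q) mod q) * q"
    using nz by (rule sig_nz)
  hence "sig (a0 + a1 * q) = (q - 1 - a1) + (q - 1 - a0) * q" by (simp only: m d)
  moreover have "q - 1 - a1 < q" using q2 by simp
  ultimately show "sig (a0 + a1 * q) \<le> t \<longleftrightarrow> lex (q - 1 - a1) (q - 1 - a0)"
    unfolding tdef lex_def using digit_cmp[OF _ b0q] by simp
qed

lemma T_img: "Tset - {0} = h ` Q"
proof (intro Set.set_eqI iffI)
  fix i assume "i \<in> Tset - {0}"
  hence i: "i \<le> t" "sig i \<le> t" "i \<noteq> 0" by (auto simp: T_alt)
  have "i < n" using i t_lt by simp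
  hence dg: "i div q < q" "i mod q < q" using i_digits[of i] q2 by auto
  have ie: "i = i mod q + i div q * q" by simp
  have "(i mod q, i div q) \<in> Q" using dig_facts[OF dg(2,1)] i ie dg unfolding Q_def by auto
  thus "i \<in> h ` Q" unfolding h_def using ie by force
next
  fix i assume "i \<in> h ` Q"
  then obtain a0 a1 where a: "(a0, a1) \<in> Q" "i = a0 + a1 * q" by (auto simp: h_def)
  hence c: "a0 < q" "a1 < q" "a0 \<noteq> 0 \<or> a1 \<noteq> 0" "lex a0 a1" "lex (q - 1 - a1) (q - 1 - a0)"
    by (auto simp: Q_def)
  have nz: "a0 + a1 * q \<noteq> 0" using dig_facts(3)[OF c(1,2)] c(3) by simp
  have l1: "a0 + a1 * q \<le> t" using dig_facts(4)[OF c(1,2)] c(4) by simp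
  have l2: "sig (a0 + a1 * q) \<le> t" using dig_facts(5)[OF c(1,2) nz] c(5) by simp
  show "i \<in> Tset - {0}" using nz l1 l2 a(2) by (simp add: T_alt)
qed

lemma inj_h: "inj_on h Q"
proof (rule inj_onI)
  fix x y assume "x \<in> Q" "y \<in> Q" "h x = h y"
  thus "x = y" unfolding h_def Q_def using digit_inj[of "fst x" q "fst y" "snd x" "snd y"]
    by (auto simp: prod_eq_iff)
qed

lemma finQ: "finite Q"
proof -
  have "Q \<subseteq> {..<q} \<times> {..<q}" by (auto simp: Q_def)
  thus ?thesis by (rule finite_subset) auto
qed

lemma zero_T: "0 \<in> Tset" by (simp add: T_alt sig_def)

lemma card_T_Q: "card Tset = card Q + 1"
proof -
  have "finite Tset" by (simp add: Tset_def)
  moreover have "card Tset > 0" using \<open>finite Tset\<close> zero_T card_gt_0_iff by blast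
  ultimately have "card Tset = card (Tset - {0}) + 1" using zero_T
    by (simp add: card_Diff_singleton)
  also have "card (Tset - {0}) = card Q" unfolding T_img by (rule card_image[OF inj_h])
  finally show ?thesis .
qed

lemma not_top: "\<not> (b0 = q - 1 \<and> b1 = q - 1)"
proof
  assume "b0 = q - 1 \<and> b1 = q - 1"
  hence "t = n" using tdef n_digits by simp
  thus False using t_lt by simp
qed

definition Q1 where "Q1 = {q - b1..<q} \<times> {..<b1}"
definition Q2 where "Q2 = {q - 1 - b1} \<times> {q - 1 - b0..<b1}"
definition Q3 where "Q3 = {q - b1..b0} \<times> {b1}"
definition Q4 where "Q4 = (if q - 1 - b1 \<le> b0 then {(q - 1 - b1, b1)} else {})"

lemma Q_split: "Q = Q1 \<union> Q2 \<union> Q3 \<union> Q4"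
proof (intro Set.set_eqI iffI)
  fix p assume "p \<in> Q"
  then obtain a0 a1 where p: "p = (a0, a1)" "a0 < q" "a1 < q" "a0 \<noteq> 0 \<or> a1 \<noteq> 0"
    "lex a0 a1" "lex (q - 1 - a1) (q - 1 - a0)" by (auto simp: Q_def)
  show "p \<in> Q1 \<union> Q2 \<union> Q3 \<union> Q4"
    using p q2 b0 b1 unfolding lex_def Q1_def Q2_def Q3_def Q4_def by auto
next
  fix p assume "p \<in> Q1 \<union> Q2 \<union> Q3 \<union> Q4"
  then obtain a0 a1 where p: "p = (a0, a1)" "(a0, a1) \<in> Q1 \<union> Q2 \<union> Q3 \<union> Q4" by (cases p) auto
  have "a0 < q \<and> a1 < q \<and> (a0 \<noteq> 0 \<or> a1 \<noteq> 0) \<and> lex a0 a1 \<and> lex (q - 1 - a1) (q - 1 - a0)"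
    using p(2) q2 b0 b1 not_top unfolding lex_def Q1_def Q2_def Q3_def Q4_def
    by (auto split: if_splits)
  thus "p \<in> Q" using p(1) by (simp add: Q_def)
qed

lemma card_Q: "card Q = b1 * b1 + (b1 - (q - 1 - b0)) + (Suc b0 - (q - b1)) + (if q - 1 - b1 \<le> b0 then 1 else 0)"
proof -
  have d1: "Q1 \<inter> Q2 = {}" unfolding Q1_def Q2_def using q2 b1 by auto
  have d2: "(Q1 \<union> Q2) \<inter> Q3 = {}" unfolding Q1_def Q2_def Q3_def by auto
  have d3: "(Q1 \<union> Q2 \<union> Q3) \<inter> Q4 = {}" unfolding Q1_def Q2_def Q3_def Q4_def using q2 b1 by auto
  have f: "finite Q1" "finite Q2" "finite Q3" "finite Q4"
    unfolding Q1_def Q2_def Q3_def Q4_def by auto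
  have "card Q = card Q1 + card Q2 + card Q3 + card Q4" unfolding Q_split
    using d1 d2 d3 f by (simp add: card_Un_disjoint)
  moreover have "card Q1 = b1 * b1" unfolding Q1_def using b1 q2 by (simp add: card_cartesian_product)
  moreover have "card Q2 = b1 - (q - 1 - b0)" unfolding Q2_def by (simp add: card_cartesian_product)
  moreover have "card Q3 = Suc b0 - (q - b1)" unfolding Q3_def by (simp add: card_cartesian_product)
  moreover have "card Q4 = (if q - 1 - b1 \<le> b0 then 1 else 0)" unfolding Q4_def by simp
  ultimately show ?thesis by simp
qed

lemma card_T:
  "card Tset = (if b0 + b1 < q - 1 then b1^2 + 1 else b1^2 + 2 * (b0 + b1 + 1 - q) + 2)"
  unfolding card_T_Q card_Q using q2 b0 b1 by (auto simp: power2_eq_square)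

end


theorem mainTheorem1:
  fixes q n t b0 b1 :: nat and P :: "nat \<Rightarrow> 'a::{field,finite}"
  assumes "primepow q"
    and "CARD('a) = q ^ 2"
    and "n = q ^ 2 - 1"
    and "bij_betw P {0..<n} (UNIV - {0})"
    and "t \<le> n - 1"
    and "b0 \<le> q - 1" and "b1 \<le> q - 1" and "t = b0 + b1 * q"
  shows "let E = D_code n P {0..t}; C = herm_dual q n E; k = cdim E;
             c = cdim E - cdim (E \<inter> C)
         in (b0 + b1 < q - 1 \<longrightarrow>
               int n - 2 * int k + int c = (int q - int b1)^2 - 2 * int b0 - 2
             \<and> min_dist n C = t + 2 \<and> c = b1^2 + 1)
          \<and> (b0 + b1 \<ge> q - 1 \<longrightarrow>
               int n - 2 * int k + int c = (int q - int b1 - 1)^2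
             \<and> min_dist n C = t + 2 \<and> int c = int (b1^2) + 2 * (int b0 + int b1 - int q) + 4)"
proof -
  interpret H0: herm q n P using assms(1-4) by unfold_locales
  have tn: "t < n" using assms(5) H0.n_pos by simp
  interpret H: hermt q n P t using assms(1-4) tn by unfold_locales
  interpret K: comb q n b0 b1 t using assms(3,5-8) H0.q_ge2 by unfold_locales
  have E: "D_code n P {0..t} = H.E" by (simp add: H.E_def H0.D_code_eq)
  have TT: "H.T = K.Tset" by (simp add: H.T_def K.Tset_def)
  have k: "cdim H.E = t + 1" by (rule H.dim_E)
  have c: "cdim H.E - cdim (H.E \<inter> H.C) = card K.Tset" using H.c_eq TT by simp
  have c2: "t + 1 - cdim (H.E \<inter> H.C) = card K.Tset" using c k by simp
  have md: "min_dist n H.C = t + 2" by (rule H.min_dist_C)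
  have nn: "int n = int q * int q - 1"
  proof -
    have "int (n + 1) = int (q * q)" using K.n_eq by simp
    thus ?thesis by simp
  qed
  have tt: "int t = int b0 + int b1 * int q" using assms(8) by simp
  show ?thesis unfolding Let_def E H.C_def[symmetric] c k c2 md
  proof (intro conjI impI)
    assume a: "b0 + b1 < q - 1"
    hence ct: "card K.Tset = b1^2 + 1" using K.card_T by simp
    show "card K.Tset = b1^2 + 1" by (rule ct)
    show "int n - 2 * int (t + 1) + int (card K.Tset) = (int q - int b1)^2 - 2 * int b0 - 2"
      unfolding ct using nn tt by (simp add: algebra_simps power2_eq_square)
  next
    assume a: "q - 1 \<le> b0 + b1"
    hence ct: "card K.Tset = b1^2 + 2 * (b0 + b1 + 1 - q) + 2" using K.card_T by simp
    have ci: "int (card K.Tset) = int b1 ^ 2 + 2 * (int b0 + int b1 + 1 - int q) + 2"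
      unfolding ct using a H0.q_ge2 by (simp add: of_nat_diff)
    show "int (card K.Tset) = int (b1^2) + 2 * (int b0 + int b1 - int q) + 4"
      unfolding ci by simp
    show "int n - 2 * int (t + 1) + int (card K.Tset) = (int q - int b1 - 1)^2"
      unfolding ci using nn tt by (simp add: algebra_simps power2_eq_square)
  qed (rule refl)+
qed

end
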